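(* Let $\mathbb{A}$ be a reduced medial algebra of dimension at least $2$ over a field $\mathbb{K}$ of characteristic not $2,3$, and let $c_1,c_2$ be nonzero idempotents. Then $c_1c_2$ is a nonzero idempotent, and for all $\lambda_1,\lambda_2\in\mathbb{K}$, $$\mathbb{A}_{c_1}(\lambda_1)\mathbb{A}_{c_2}(\lambda_2)\subset\mathbb{A}_{c_1c_2}(\lambda_1\lambda_2),\qquad \mathbb{A}_{c_1}(\lambda_1)\mathbb{A}_{c_1}(\lambda_2)\subset\mathbb{A}_{c_1}(\lambda_1\lambda_2).$$ In particular $\sigma(c_1)\cup\sigma(c_2)\subset\sigma(c_1c_2)$, and $\dim\mathbb{A}_{c_j}(\lambda_j)\le\dim\mathbb{A}_{c_ic_j}(\lambda_j)$ for $\{i,j\}=\{1,2\}$ and all $\lambda_j\in\sigma(c_j)$.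
   Context: All algebras commutative, possibly nonassociative, finite-dimensional. Medial: $(xy)(zw)=(xz)(yw)$ identically. $L_c:x\mapsto cx$, $\mathbb{A}_c(\lambda)=\ker(L_c-\lambda\mathbf{1})$, and $\sigma(c)$ is the set of distinct eigenvalues of $L_c$. A medial algebra is reduced if $\ker L_c=0$ for every nonzero idempotent $c$. *)

theory Defs
  imports Complex_Main
begin

definition fd_comm_algebra ::
  "('k::field \<Rightarrow> 'v::ab_group_add \<Rightarrow> 'v) \<Rightarrow> ('v \<Rightarrow> 'v \<Rightarrow> 'v) \<Rightarrow> bool" where
  "fd_comm_algebra scale mult \<longleftrightarrow>
     vector_space scale \<and>
     (\<exists>B. finite_dimensional_vector_space scale B) \<and>
     (\<forall>x. Vector_Spaces.linear scale scale (mult x)) \<and>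
     (\<forall>y. Vector_Spaces.linear scale scale (\<lambda>x. mult x y)) \<and>
     (\<forall>x y. mult x y = mult y x)"

definition medial :: "('v \<Rightarrow> 'v \<Rightarrow> 'v) \<Rightarrow> bool" where
  "medial mult \<longleftrightarrow> (\<forall>x y z w. mult (mult x y) (mult z w) = mult (mult x z) (mult y w))"

definition idempotent_el :: "('v \<Rightarrow> 'v \<Rightarrow> 'v) \<Rightarrow> 'v \<Rightarrow> bool" where
  "idempotent_el mult c \<longleftrightarrow> mult c c = c"

definition reduced :: "('v \<Rightarrow> 'v \<Rightarrow> 'v) \<Rightarrow> ('v::zero) \<Rightarrow> bool" where
  "reduced mult z \<longleftrightarrow> (\<forall>c. c \<noteq> z \<and> idempotent_el mult c \<longrightarrow> (\<forall>x. mult c x = z \<longrightarrow> x = z))"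

definition eigsp ::
  "('k \<Rightarrow> 'v \<Rightarrow> 'v) \<Rightarrow> ('v \<Rightarrow> 'v \<Rightarrow> 'v) \<Rightarrow> 'v \<Rightarrow> 'k \<Rightarrow> 'v set" where
  "eigsp scale mult c l = {x. mult c x = scale l x}"

definition spec ::
  "('k \<Rightarrow> 'v \<Rightarrow> 'v) \<Rightarrow> ('v \<Rightarrow> 'v \<Rightarrow> 'v) \<Rightarrow> 'v::zero \<Rightarrow> 'k set" where
  "spec scale mult c = {l. \<exists>x. x \<noteq> 0 \<and> mult c x = scale l x}"

end

theory Submission
  imports Defs
begin

lemma lin_scale: "Vector_Spaces.linear (scale::'k::field \<Rightarrow> 'v::ab_group_add \<Rightarrow> 'v) scale f \<Longrightarrow> f (scale a y) = scale a (f y)"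
  unfolding Vector_Spaces.linear_def module_hom_def module_hom_axioms_def by blast

lemma lin_diff: "Vector_Spaces.linear (scale::'k::field \<Rightarrow> 'v::ab_group_add \<Rightarrow> 'v) scale f \<Longrightarrow> f (y - z) = f y - f z"
  by (rule module_hom.diff, simp add: linear_iff_module_hom)

theorem proposition4p2:
  fixes scale :: "'k::field \<Rightarrow> 'v::ab_group_add \<Rightarrow> 'v"
    and mult :: "'v \<Rightarrow> 'v \<Rightarrow> 'v"
    and c1 c2 :: 'v
  assumes alg: "fd_comm_algebra scale mult"
    and med: "medial mult"
    and red: "reduced mult 0"
    and dim2: "vector_space.dim scale (UNIV :: 'v set) \<ge> 2"
    and char2: "(2::'k) \<noteq> 0" and char3: "(3::'k) \<noteq> 0"
    and c1: "c1 \<noteq> 0" "idempotent_el mult c1"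
    and c2: "c2 \<noteq> 0" "idempotent_el mult c2"
  shows "mult c1 c2 \<noteq> 0 \<and> idempotent_el mult (mult c1 c2)
    \<and> (\<forall>l1 l2. \<forall>x\<in>eigsp scale mult c1 l1. \<forall>y\<in>eigsp scale mult c2 l2.
          mult x y \<in> eigsp scale mult (mult c1 c2) (l1 * l2))
    \<and> (\<forall>l1 l2. \<forall>x\<in>eigsp scale mult c1 l1. \<forall>y\<in>eigsp scale mult c1 l2.
          mult x y \<in> eigsp scale mult c1 (l1 * l2))
    \<and> spec scale mult c1 \<union> spec scale mult c2 \<subseteq> spec scale mult (mult c1 c2)
    \<and> (\<forall>l\<in>spec scale mult c1.
          vector_space.dim scale (eigsp scale mult c1 l)
            \<le> vector_space.dim scale (eigsp scale mult (mult c2 c1) l))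
    \<and> (\<forall>l\<in>spec scale mult c2.
          vector_space.dim scale (eigsp scale mult c2 l)
            \<le> vector_space.dim scale (eigsp scale mult (mult c1 c2) l))"
proof -
  have vs: "vector_space scale" and fd: "\<exists>B. finite_dimensional_vector_space scale B"
    and linL: "\<And>x. Vector_Spaces.linear scale scale (mult x)"
    and linR: "\<And>y. Vector_Spaces.linear scale scale (\<lambda>x. mult x y)"
    and comm: "\<And>x y. mult x y = mult y x"
    using alg unfolding fd_comm_algebra_def by auto
  obtain B where fdB: "finite_dimensional_vector_space scale B" using fd by auto
  interpret finite_dimensional_vector_space scale B by (rule fdB)
  have M: "\<And>x y z w. mult (mult x y) (mult z w) = mult (mult x z) (mult y w)"
    using med unfolding medial_def by blast
  have R: "\<And>c x. c \<noteq> 0 \<Longrightarrow> mult c c = c \<Longrightarrow> mult c x = 0 \<Longrightarrow> x = 0"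
    using red unfolding reduced_def idempotent_el_def by blast
  have i1: "mult c1 c1 = c1" and i2: "mult c2 c2 = c2" using c1 c2 unfolding idempotent_el_def by auto
  have sL: "\<And>x a y. mult x (scale a y) = scale a (mult x y)"
    by (rule lin_scale[OF linL])
  have sR: "\<And>x a y. mult (scale a y) x = scale a (mult y x)"
  proof -
    fix x a y
    have "mult (scale a y) x = mult x (scale a y)" by (rule comm)
    also have "\<dots> = scale a (mult x y)" by (rule sL)
    also have "mult x y = mult y x" by (rule comm)
    finally show "mult (scale a y) x = scale a (mult y x)" .
  qed
  have dL: "\<And>x y z. mult x (y - z) = mult x y - mult x z"
    by (rule lin_diff[OF linL])
  have inj: "\<And>c. c \<noteq> 0 \<Longrightarrow> mult c c = c \<Longrightarrow> inj (mult c)"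
  proof (rule injI)
    fix c x y assume "c \<noteq> 0" "mult c c = c" "mult c x = mult c y"
    note h = this
    have "mult c (x - y) = mult c x - mult c y" by (rule dL)
    also have "\<dots> = 0" using h(3) by simp
    finally have "x - y = 0" by (rule R[OF h(1) h(2)])
    then show "x = y" by simp
  qed
  have A1: "mult c1 c2 \<noteq> 0" using R[OF c1(1) i1, of c2] c2(1) by blast
  have A2: "idempotent_el mult (mult c1 c2)" unfolding idempotent_el_def using M[of c1 c2 c1 c2] i1 i2 by simp
  have A3: "\<forall>l1 l2. \<forall>x\<in>eigsp scale mult c1 l1. \<forall>y\<in>eigsp scale mult c2 l2.
          mult x y \<in> eigsp scale mult (mult c1 c2) (l1 * l2)"
  proof (intro allI ballI)
    fix l1 l2 x y assume x: "x \<in> eigsp scale mult c1 l1" and y: "y \<in> eigsp scale mult c2 l2"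
    have "mult (mult c1 c2) (mult x y) = mult (mult c1 x) (mult c2 y)" by (rule M)
    also have "\<dots> = mult (scale l1 x) (scale l2 y)" using x y unfolding eigsp_def by simp
    also have "\<dots> = scale l1 (mult x (scale l2 y))" by (rule sR)
    also have "\<dots> = scale l1 (scale l2 (mult x y))" by (simp only: sL)
    also have "\<dots> = scale (l1 * l2) (mult x y)" by (rule scale_scale)
    finally show "mult x y \<in> eigsp scale mult (mult c1 c2) (l1 * l2)" unfolding eigsp_def by simp
  qed
  have A4: "\<forall>l1 l2. \<forall>x\<in>eigsp scale mult c1 l1. \<forall>y\<in>eigsp scale mult c1 l2.
          mult x y \<in> eigsp scale mult c1 (l1 * l2)"
  proof (intro allI ballI)
    fix l1 l2 x y assume x: "x \<in> eigsp scale mult c1 l1" and y: "y \<in> eigsp scale mult c1 l2"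
    have "mult c1 (mult x y) = mult (mult c1 c1) (mult x y)" using i1 by simp
    also have "\<dots> = mult (mult c1 x) (mult c1 y)" by (rule M)
    also have "\<dots> = mult (scale l1 x) (scale l2 y)" using x y unfolding eigsp_def by simp
    also have "\<dots> = scale l1 (mult x (scale l2 y))" by (rule sR)
    also have "\<dots> = scale l1 (scale l2 (mult x y))" by (simp only: sL)
    also have "\<dots> = scale (l1 * l2) (mult x y)" by (rule scale_scale)
    finally show "mult x y \<in> eigsp scale mult c1 (l1 * l2)" unfolding eigsp_def by simp
  qed
  have A5: "spec scale mult c1 \<union> spec scale mult c2 \<subseteq> spec scale mult (mult c1 c2)"
  proof
    fix l assume "l \<in> spec scale mult c1 \<union> spec scale mult c2"
    then show "l \<in> spec scale mult (mult c1 c2)"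
    proof
      assume "l \<in> spec scale mult c1"
      then obtain x where x: "x \<noteq> 0" "mult c1 x = scale l x" unfolding spec_def by auto
      have "mult c2 x \<noteq> 0" using R[OF c2(1) i2] x by blast
      moreover have "mult (mult c1 c2) (mult c2 x) = scale l (mult c2 x)"
      proof -
        have "mult (mult c1 c2) (mult c2 x) = mult (mult c1 c2) (mult x c2)" by (simp only: comm[of c2 x])
        also have "\<dots> = mult (mult c1 x) (mult c2 c2)" by (rule M)
        also have "\<dots> = mult (scale l x) c2" using x i2 by simp
        also have "\<dots> = scale l (mult x c2)" by (rule sR)
        also have "\<dots> = scale l (mult c2 x)" by (simp only: comm[of c2 x])
        finally show ?thesis .
      qed
      ultimately show ?thesis unfolding spec_def by auto
    next
      assume "l \<in> spec scale mult c2"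
      then obtain x where x: "x \<noteq> 0" "mult c2 x = scale l x" unfolding spec_def by auto
      have "mult c1 x \<noteq> 0" using R[OF c1(1) i1] x by blast
      moreover have "mult (mult c1 c2) (mult c1 x) = scale l (mult c1 x)"
      proof -
        have "mult (mult c1 c2) (mult c1 x) = mult (mult c1 c1) (mult c2 x)" by (rule M)
        also have "\<dots> = mult c1 (scale l x)" using x i1 by simp
        also have "\<dots> = scale l (mult c1 x)" by (rule sL)
        finally show ?thesis .
      qed
      ultimately show ?thesis unfolding spec_def by auto
    qed
  qed
  interpret P: finite_dimensional_vector_space_pair_1 scale B scale by unfold_locales
  have D: "dim (eigsp scale mult c l) \<le> dim (eigsp scale mult (mult d c) l)"
    if "d \<noteq> 0" "mult d d = d" for c d l
  proof -
    have "dim (eigsp scale mult c l) = dim (mult d ` eigsp scale mult c l)"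
    proof -
      have "inj_on (mult d) (span (eigsp scale mult c l))" using inj[OF that] by (rule inj_on_subset) simp
      from P.dim_image_eq[OF linL this] show ?thesis by simp
    qed
    also have "\<dots> \<le> dim (eigsp scale mult (mult d c) l)"
    proof (rule dim_subset)
      show "mult d ` eigsp scale mult c l \<subseteq> eigsp scale mult (mult d c) l"
      proof
        fix z assume "z \<in> mult d ` eigsp scale mult c l"
        then obtain x where z: "z = mult d x" and x: "mult c x = scale l x" unfolding eigsp_def by auto
        have "mult (mult d c) (mult d x) = mult (mult d d) (mult c x)" by (rule M)
        also have "\<dots> = mult d (scale l x)" using x that by simp
        also have "\<dots> = scale l (mult d x)" by (rule sL)
        finally show "z \<in> eigsp scale mult (mult d c) l" unfolding eigsp_def z by simp
      qed
    qed
    finally show ?thesis .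
  qed
  have D1: "\<forall>l\<in>spec scale mult c1. dim (eigsp scale mult c1 l) \<le> dim (eigsp scale mult (mult c2 c1) l)" using D[OF c2(1) i2] by blast
  have D2: "\<forall>l\<in>spec scale mult c2. dim (eigsp scale mult c2 l) \<le> dim (eigsp scale mult (mult c1 c2) l)" using D[OF c1(1) i1] by blast
  show ?thesis using A1 A2 A3 A4 A5 D1 D2 by (intro conjI)
qed

end
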